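(* Let $f:\mathbb{R}^n\to\mathbb{R}$ be convex and differentiable, and let $x_*$ be a minimizer of $f$ on $\mathbb{R}^n$, $f_*=f(x_* )$. Fix a starting point $x^0\in\mathbb{R}^n$ and put $R=\|x^0-x_*\|_2$, $B_R(x_* )=\{x:\|x-x_*\|_2\le R\}$. Assume that for some $L>0$ $$\|\nabla f(y)-\nabla f(x)\|_2\le L\|y-x\|_2\quad\text{for all } x,y\in B_R(x_* ).$$ Consider the fast gradient method (FGM) with $x^0=y^0=z^0$ and, for $k=0,1,\dots$, $$x^{k+1}=\tau_k z^k+(1-\tau_k)y^k,\qquad y^{k+1}=x^{k+1}-\tfrac1L\nabla f(x^{k+1}),\qquad z^{k+1}=z^k-\alpha_{k+1}\nabla f(x^{k+1}),$$ where $\alpha_{k+1}=\frac{k+2}{2L}$ and $\tau_k=\frac{2}{k+2}$. Then for every $N\ge1$ the generated points satisfy $$\max\{\|x^k-x_*\|_2,\|y^k-x_*\|_2,\|z^k-x_*\|_2\}\le\|x^0-x_*\|_2,\qquad k=0,\dots,N,$$ and, with $$\bar y^N=\frac{1}{N(N+3)}\Big(\sum_{k=1}^{N-1}y^k+(N+1)^2y^N\Big),$$ one has $$f(\bar y^N)\le\frac{4L}{N(N+3)}\min_{x\in\mathbb{R}^n}\Big\{\sum_{k=0}^{N-1}\frac{k+2}{2L}\big\{f(x^{k+1})+\langle\nabla f(x^{k+1}),x-x^{k+1}\rangle\big\}+\frac12\|z^0-x\|_2^2\Big\},$$ and consequently $$f(\bar y^N)-f_*\le\frac{2L\|z^0-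x_*\|_2^2}{N(N+3)}\le\frac{2LR^2}{(N+1)^2}.$$
   Context: $\|\cdot\|_2$ is the Euclidean norm. The step sizes $\alpha_{k+1}=\frac{k+2}{2L}$, $\tau_k=\frac{2}{k+2}$ are the solution of $\alpha_1=1/L$, $\alpha_k^2L=\alpha_{k+1}^2L-\alpha_{k+1}+\frac{1}{4L}$, $\tau_k=\frac{1}{\alpha_{k+1}L}$. *)

theory Defs
  imports "HOL-Analysis.Analysis"
begin

primrec fgm :: "('a::real_normed_vector \<Rightarrow> 'a) \<Rightarrow> real \<Rightarrow> 'a \<Rightarrow> nat \<Rightarrow> 'a \<times> 'a \<times> 'a" where
  "fgm g L x0 0 = (x0, x0, x0)"
| "fgm g L x0 (Suc k) =
     (let (x, y, z) = fgm g L x0 k;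
          \<tau> = 2 / (real k + 2);
          \<alpha> = (real k + 2) / (2 * L);
          xn = \<tau> *\<^sub>R z + (1 - \<tau>) *\<^sub>R y
      in (xn, xn - (1 / L) *\<^sub>R g xn, z - \<alpha> *\<^sub>R g xn))"

definition fgm_x where "fgm_x g L x0 k = fst (fgm g L x0 k)"
definition fgm_y where "fgm_y g L x0 k = fst (snd (fgm g L x0 k))"
definition fgm_z where "fgm_z g L x0 k = snd (snd (fgm g L x0 k))"

end

theory Submission
  imports Defs
begin

lemma tele:
  fixes F :: "nat \<Rightarrow> real"
  assumes "n \<ge> 1"
  shows "(\<Sum>k<n. (real k + 2)^2 * F (Suc k) - real k * (real k + 2) * F k) = (\<Sum>j=1..n-1. F j) + (real n + 1)^2 * F n"
  using assms
proof (induction n rule: dec_induct)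
  case base
  then show ?case by simp
next
  case (step m)
  then obtain p where m: "m = Suc p" by (cases m) auto
  have "(\<Sum>j=1..Suc m - 1. F j) = (\<Sum>j=1..m-1. F j) + F m"
    using m by simp
  then show ?case using step.IH
    by (simp add: algebra_simps power2_eq_square)
qed

lemma sumc: "(\<Sum>k<n. 2 * (real k + 2)) = real n * (real n + 3)"
  by (induction n) (simp_all add: algebra_simps)

locale fgmL =
  fixes f :: "'a::euclidean_space \<Rightarrow> real" and g :: "'a \<Rightarrow> 'a" and xs x0 :: 'a and L :: real
  assumes conv: "convex_on UNIV f"
    and grad: "\<And>x. (f has_derivative (\<lambda>h. g x \<bullet> h)) (at x)"
    and minim: "\<And>x. f xs \<le> f x"
    and Lpos: "L > 0"
    and lip: "\<And>x y. x \<in> cball xs (norm (x0 - xs)) \<Longrightarrow> y \<in> cball xs (norm (x0 - xs)) \<Longrightarrow>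
               norm (g y - g x) \<le> L * norm (y - x)"
begin

lemma line_deriv: "((\<lambda>t. f (a + t *\<^sub>R d)) has_real_derivative (g (a + t *\<^sub>R d) \<bullet> d)) (at t)"
proof -
  have 1: "((\<lambda>t. a + t *\<^sub>R d) has_derivative (\<lambda>s. s *\<^sub>R d)) (at t)"
    by (auto intro!: derivative_eq_intros)
  have "((\<lambda>t. f (a + t *\<^sub>R d)) has_derivative (\<lambda>s. g (a + t *\<^sub>R d) \<bullet> (s *\<^sub>R d))) (at t)"
    using has_derivative_compose[OF 1 grad] by (simp add: o_def)
  moreover have "(\<lambda>s. g (a + t *\<^sub>R d) \<bullet> (s *\<^sub>R d)) = (*) (g (a + t *\<^sub>R d) \<bullet> d)"
    by (rule ext) simp
  ultimately show ?thesis
    by (simp add: has_field_derivative_def)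
qed

lemma grad_ineq: "f x + g x \<bullet> (y - x) \<le> f y"
proof -
  define \<phi> where "\<phi> = (\<lambda>t. f (x + t *\<^sub>R (y - x)))"
  have c: "convex_on UNIV \<phi>"
  proof (rule convex_onI)
    fix t a b :: real assume "t > 0" "t < 1"
    have "\<phi> ((1 - t) *\<^sub>R a + t *\<^sub>R b) = f ((1 - t) *\<^sub>R (x + a *\<^sub>R (y - x)) + t *\<^sub>R (x + b *\<^sub>R (y - x)))"
      unfolding \<phi>_def by (simp add: algebra_simps)
    also have "\<dots> \<le> (1 - t) * \<phi> a + t * \<phi> b"
      unfolding \<phi>_def using convex_onD[OF conv, of t] \<open>t > 0\<close> \<open>t < 1\<close> by auto
    finally show "\<phi> ((1 - t) *\<^sub>R a + t *\<^sub>R b) \<le> (1 - t) * \<phi> a + t * \<phi> b" .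
  qed simp
  have d: "(\<phi> has_field_derivative (g x \<bullet> (y - x))) (at 0 within UNIV)"
    unfolding \<phi>_def using line_deriv[of x "y - x" 0] by simp
  have "\<phi> 1 - \<phi> 0 \<ge> (g x \<bullet> (y - x)) * (1 - 0)"
    by (rule convex_on_imp_above_tangent[OF c _ _ _ d]) auto
  then show ?thesis unfolding \<phi>_def by simp
qed

lemma g_xs: "g xs = 0"
proof -
  have "(\<lambda>h. g xs \<bullet> h) = (\<lambda>h. 0)"
    by (rule has_derivative_local_min[OF grad]) (auto intro: always_eventually minim)
  then have "g xs \<bullet> g xs = 0" by metis
  then show ?thesis by simp
qed

abbreviation "R \<equiv> norm (x0 - xs)"

lemma descent:
  assumes a: "a \<in> cball xs R" and b: "b \<in> cball xs R"
  shows "f b \<le> f a + g a \<bullet> (b - a) + L / 2 * (norm (b - a))^2"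
proof -
  define d where "d = b - a"
  define h where "h = (\<lambda>t. f (a + t *\<^sub>R d) - t * (g a \<bullet> d) - t^2 * L / 2 * (norm d)^2)"
  have "h 1 \<le> h 0"
  proof (rule DERIV_nonpos_imp_nonincreasing[of 0 1])
    fix t :: real assume t: "0 \<le> t" "t \<le> 1"
    have "a + t *\<^sub>R d = (1 - t) *\<^sub>R a + t *\<^sub>R b" unfolding d_def by (simp add: algebra_simps)
    also have "\<dots> \<in> cball xs R"
      using convexD[OF convex_cball a b, of "1-t" t] t by auto
    finally have mem: "a + t *\<^sub>R d \<in> cball xs R" .
    have D: "(h has_real_derivative (g (a + t *\<^sub>R d) \<bullet> d - g a \<bullet> d - t * L * (norm d)^2)) (at t)"
      unfolding h_def
      by (rule derivative_eq_intros line_deriv refl | simp)+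
    have "(g (a + t *\<^sub>R d) - g a) \<bullet> d \<le> norm (g (a + t *\<^sub>R d) - g a) * norm d"
      by (rule norm_cauchy_schwarz)
    also have "\<dots> \<le> L * norm (t *\<^sub>R d) * norm d"
      using lip[OF a mem] by (simp add: mult_right_mono)
    also have "\<dots> = t * L * (norm d)^2" using t by (simp add: power2_eq_square)
    finally have "g (a + t *\<^sub>R d) \<bullet> d - g a \<bullet> d - t * L * (norm d)^2 \<le> 0"
      by (simp add: inner_diff_left)
    with D show "\<exists>y. (h has_real_derivative y) (at t) \<and> y \<le> 0" by blast
  qed simp
  then show ?thesis unfolding h_def d_def by simp
qed

lemma norm_sq_diff: "(norm (a - b))^2 = (norm a)^2 - 2 * (a \<bullet> b) + (norm b)^2"
  for a b :: 'a
  by (simp add: power2_norm_eq_inner inner_diff_left inner_diff_right inner_commute)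

lemma cocoer:
  assumes x: "x \<in> cball xs R"
  shows "f x - f xs \<le> g x \<bullet> (x - xs) - (norm (g x))^2 / (2 * L)"
proof -
  define b where "b = xs + (1 / L) *\<^sub>R g x"
  have "norm (b - xs) = norm (g x - g xs) / L" using Lpos by (simp add: b_def g_xs)
  also have "\<dots> \<le> norm (x - xs)"
    using lip[of xs x] x Lpos by (simp add: divide_le_eq mult.commute)
  finally have bb: "b \<in> cball xs R" using x by (simp add: dist_norm norm_minus_commute)
  have xsin: "xs \<in> cball xs R" by simp
  have 1: "f b \<le> f xs + L / 2 * (norm (b - xs))^2"
    using descent[OF xsin bb] by (simp add: g_xs)
  have 2: "(norm (b - xs))^2 = (norm (g x))^2 / L^2"
    using Lpos by (simp add: b_def power_divide)
  have 3: "f x + g x \<bullet> (b - x) \<le> f b" by (rule grad_ineq)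
  have 4: "g x \<bullet> (b - x) = g x \<bullet> (xs - x) + (norm (g x))^2 / L"
    by (simp add: b_def inner_diff_right inner_add_right power2_norm_eq_inner)
  have 5: "L / 2 * ((norm (g x))^2 / L^2) = (norm (g x))^2 / (2 * L)"
    using Lpos by (simp add: power2_eq_square field_simps)
  have 6: "(norm (g x))^2 / L = 2 * ((norm (g x))^2 / (2 * L))" using Lpos by simp
  have 7: "g x \<bullet> (xs - x) = - (g x \<bullet> (x - xs))" by (simp add: inner_diff_right)
  have h1: "f b \<le> f xs + L / 2 * ((norm (g x))^2 / L^2)" using 1 unfolding 2 .
  show ?thesis using h1 3 4 5 6 7 by linarith
qed

lemma step_ball:
  assumes x: "x \<in> cball xs R"
  shows "x - (1 / L) *\<^sub>R g x \<in> cball xs R"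
proof -
  have "(norm ((x - xs) - (1 / L) *\<^sub>R g x))^2 =
      (norm (x - xs))^2 - 2 * ((x - xs) \<bullet> ((1 / L) *\<^sub>R g x)) + (norm ((1 / L) *\<^sub>R g x))^2"
    by (rule norm_sq_diff)
  also have "\<dots> = (norm (x - xs))^2 - 2 / L * (g x \<bullet> (x - xs)) + (norm (g x))^2 / L^2"
    using Lpos by (simp add: inner_commute power_divide)
  also have "\<dots> \<le> (norm (x - xs))^2"
  proof -
    have "g x \<bullet> (x - xs) \<ge> (norm (g x))^2 / (2 * L)"
      using cocoer[OF x] minim[of x] by linarith
    then have "2 / L * (g x \<bullet> (x - xs)) \<ge> 2 / L * ((norm (g x))^2 / (2 * L))"
      using Lpos by (intro mult_left_mono) auto
    moreover have "2 / L * ((norm (g x))^2 / (2 * L)) = (norm (g x))^2 / L^2"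
      using Lpos by (simp add: power2_eq_square field_simps)
    ultimately show ?thesis by linarith
  qed
  finally have "norm ((x - xs) - (1 / L) *\<^sub>R g x) \<le> norm (x - xs)"
    using power2_le_imp_le by fastforce
  also have "\<dots> \<le> R" using x by (simp add: dist_norm norm_minus_commute)
  finally show ?thesis
    by (simp add: dist_norm norm_minus_commute algebra_simps)
qed

lemma step_descent:
  assumes x: "x \<in> cball xs R"
  shows "f (x - (1 / L) *\<^sub>R g x) \<le> f x - (norm (g x))^2 / (2 * L)"
proof -
  have "f (x - (1 / L) *\<^sub>R g x) \<le> f x + g x \<bullet> (- ((1 / L) *\<^sub>R g x)) + L / 2 * (norm (- ((1 / L) *\<^sub>R g x)))^2"
    using descent[OF x step_ball[OF x]] by simp
  also have "\<dots> = f x - (norm (g x))^2 / (2 * L)"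
    using Lpos by (simp add: power2_norm_eq_inner[symmetric] power_divide power2_eq_square field_simps)
  finally show ?thesis .
qed

abbreviation "X k \<equiv> fgm_x g L x0 k"
abbreviation "Y k \<equiv> fgm_y g L x0 k"
abbreviation "Z k \<equiv> fgm_z g L x0 k"

lemma XYZ0: "X 0 = x0" "Y 0 = x0" "Z 0 = x0"
  by (simp_all add: fgm_x_def fgm_y_def fgm_z_def)

lemma XYZ_Suc:
  "X (Suc k) = (2 / (real k + 2)) *\<^sub>R Z k + (1 - 2 / (real k + 2)) *\<^sub>R Y k"
  "Y (Suc k) = X (Suc k) - (1 / L) *\<^sub>R g (X (Suc k))"
  "Z (Suc k) = Z k - ((real k + 2) / (2 * L)) *\<^sub>R g (X (Suc k))"
  by (simp_all add: fgm_x_def fgm_y_def fgm_z_def Let_def split: prod.split)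

lemma step:
  assumes Yb: "Y k \<in> cball xs R" and Zb: "Z k \<in> cball xs R"
  shows "X (Suc k) \<in> cball xs R" "Y (Suc k) \<in> cball xs R"
    "(real k + 2)^2 * f (Y (Suc k)) - real k * (real k + 2) * f (Y k) \<le>
      2 * (real k + 2) * (f (X (Suc k)) + g (X (Suc k)) \<bullet> (u - X (Suc k)))
      + 2 * L * ((norm (Z k - u))^2 - (norm (Z (Suc k) - u))^2)"
proof -
  define c where "c = real k + 2"
  define G where "G = g (X (Suc k))"
  have c2: "c \<ge> 2" unfolding c_def by simp
  have Xb: "X (Suc k) \<in> cball xs R"
    unfolding XYZ_Suc(1) using convexD[OF convex_cball Zb Yb, of "2 / (real k + 2)" "1 - 2 / (real k + 2)"]
    by auto
  show "X (Suc k) \<in> cball xs R" by (rule Xb)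
  show "Y (Suc k) \<in> cball xs R" unfolding XYZ_Suc(2) by (rule step_ball[OF Xb])
  have F4: "f (Y (Suc k)) \<le> f (X (Suc k)) - (norm G)^2 / (2 * L)"
    unfolding XYZ_Suc(2) G_def by (rule step_descent[OF Xb])
  have vec: "2 *\<^sub>R (Z k - X (Suc k)) = real k *\<^sub>R (X (Suc k) - Y k)"
  proof -
    have s1: "real k / c + 2 / c = 1" unfolding c_def add_divide_distrib[symmetric] by simp
    have s2: "1 - 2 / c = real k / c" using s1 by linarith
    have "Z k - X (Suc k) = (real k / c + 2 / c) *\<^sub>R Z k - (2 / c) *\<^sub>R Z k - (real k / c) *\<^sub>R Y k"
      unfolding XYZ_Suc(1) c_def[symmetric] s1 s2 by simp
    also have "\<dots> = (real k / c) *\<^sub>R (Z k - Y k)"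
      by (simp add: algebra_simps)
    finally have A: "Z k - X (Suc k) = (real k / c) *\<^sub>R (Z k - Y k)" .
    have "X (Suc k) - Y k = (2 / c) *\<^sub>R Z k + (real k / c) *\<^sub>R Y k - (real k / c + 2 / c) *\<^sub>R Y k"
      unfolding XYZ_Suc(1) c_def[symmetric] s1 s2 by simp
    also have "(2 / c) *\<^sub>R Z k + (real k / c) *\<^sub>R Y k - (real k / c + 2 / c) *\<^sub>R Y k = (2 / c) *\<^sub>R (Z k - Y k)"
      by (simp add: algebra_simps)
    finally have B: "X (Suc k) - Y k = (2 / c) *\<^sub>R (Z k - Y k)" .
    show ?thesis unfolding A B scaleR_scaleR by (simp add: mult.commute)
  qed
  have F1: "2 * (G \<bullet> (Z k - X (Suc k))) = - (real k * (G \<bullet> (Y k - X (Suc k))))"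
  proof -
    have "2 * (G \<bullet> (Z k - X (Suc k))) = G \<bullet> (2 *\<^sub>R (Z k - X (Suc k)))" by simp
    also have "\<dots> = real k * (G \<bullet> (X (Suc k) - Y k))" unfolding vec by simp
    finally show ?thesis by (simp add: inner_diff_right algebra_simps)
  qed
  have F2: "real k * (G \<bullet> (Y k - X (Suc k))) \<le> real k * (f (Y k) - f (X (Suc k)))"
    using grad_ineq[of "X (Suc k)" "Y k"] unfolding G_def by (intro mult_left_mono) auto
  have F3: "2 * L * ((norm (Z k - u))^2 - (norm (Z (Suc k) - u))^2)
      = 2 * c * (G \<bullet> (Z k - u)) - c^2 * (norm G)^2 / (2 * L)"
  proof -
    have e: "Z (Suc k) - u = (Z k - u) - (c / (2 * L)) *\<^sub>R G"
      unfolding XYZ_Suc(3) c_def G_def by simp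
    have "(norm (Z (Suc k) - u))^2 = (norm (Z k - u))^2 - 2 * ((Z k - u) \<bullet> ((c / (2 * L)) *\<^sub>R G)) + (norm ((c / (2 * L)) *\<^sub>R G))^2"
      unfolding e by (rule norm_sq_diff)
    also have "\<dots> = (norm (Z k - u))^2 - c / L * (G \<bullet> (Z k - u)) + c^2 / (4 * L^2) * (norm G)^2"
      using Lpos c2 by (simp add: inner_commute power_mult_distrib power_divide)
    finally show ?thesis using Lpos by (simp add: field_simps power2_eq_square)
  qed
  have F5: "G \<bullet> (u - X (Suc k)) + G \<bullet> (Z k - u) = G \<bullet> (Z k - X (Suc k))"
    by (simp add: inner_diff_right)
  have F4': "c^2 * f (Y (Suc k)) \<le> c^2 * f (X (Suc k)) - c^2 * (norm G)^2 / (2 * L)"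
    using mult_left_mono[OF F4, of "c^2"] by (simp add: right_diff_distrib)
  have F2': "c * (real k * (G \<bullet> (Y k - X (Suc k)))) \<le> c * (real k * (f (Y k) - f (X (Suc k))))"
    using mult_left_mono[OF F2, of c] c2 by simp
  have kc: "real k = c - 2" unfolding c_def by simp
  show "(real k + 2)^2 * f (Y (Suc k)) - real k * (real k + 2) * f (Y k) \<le>
      2 * (real k + 2) * (f (X (Suc k)) + g (X (Suc k)) \<bullet> (u - X (Suc k)))
      + 2 * L * ((norm (Z k - u))^2 - (norm (Z (Suc k) - u))^2)"
    unfolding F3 c_def[symmetric] G_def[symmetric]
  proof -
    have "2 * c * (f (X (Suc k)) + G \<bullet> (u - X (Suc k))) + (2 * c * (G \<bullet> (Z k - u)) - c^2 * (norm G)^2 / (2 * L))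
        = 2 * c * f (X (Suc k)) + c * (2 * (G \<bullet> (Z k - X (Suc k)))) - c^2 * (norm G)^2 / (2 * L)"
      using F5 by (simp add: algebra_simps)
    also have "\<dots> = 2 * c * f (X (Suc k)) - c * (real k * (G \<bullet> (Y k - X (Suc k)))) - c^2 * (norm G)^2 / (2 * L)"
      unfolding F1 by simp
    also have "\<dots> \<ge> 2 * c * f (X (Suc k)) - c * (real k * (f (Y k) - f (X (Suc k)))) - c^2 * (norm G)^2 / (2 * L)"
      using F2' by linarith
    also have "2 * c * f (X (Suc k)) - c * (real k * (f (Y k) - f (X (Suc k)))) - c^2 * (norm G)^2 / (2 * L)
        = c^2 * f (X (Suc k)) - c^2 * (norm G)^2 / (2 * L) - real k * c * f (Y k)"
      unfolding kc by (simp add: algebra_simps power2_eq_square)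
    finally show "c\<^sup>2 * f (Y (Suc k)) - real k * c * f (Y k)
      \<le> 2 * c * (f (X (Suc k)) + G \<bullet> (u - X (Suc k))) + (2 * c * (G \<bullet> (Z k - u)) - c\<^sup>2 * (norm G)\<^sup>2 / (2 * L))"
      using F4' by linarith
  qed
qed

lemma main:
  "(\<forall>j\<le>n. X j \<in> cball xs R \<and> Y j \<in> cball xs R \<and> Z j \<in> cball xs R) \<and>
   (\<forall>u. (\<Sum>k<n. (real k + 2)^2 * f (Y (Suc k)) - real k * (real k + 2) * f (Y k)) \<le>
      (\<Sum>k<n. 2 * (real k + 2) * (f (X (Suc k)) + g (X (Suc k)) \<bullet> (u - X (Suc k))))
      + 2 * L * ((norm (Z 0 - u))^2 - (norm (Z n - u))^2))"
proof (induction n)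
  case 0
  then show ?case by (simp add: XYZ0 dist_norm norm_minus_commute)
next
  case (Suc n)
  then have Yb: "Y n \<in> cball xs R" and Zb: "Z n \<in> cball xs R" by auto
  note st = step[OF Yb Zb]
  have ineq: "\<forall>u. (\<Sum>k<Suc n. (real k + 2)^2 * f (Y (Suc k)) - real k * (real k + 2) * f (Y k)) \<le>
      (\<Sum>k<Suc n. 2 * (real k + 2) * (f (X (Suc k)) + g (X (Suc k)) \<bullet> (u - X (Suc k))))
      + 2 * L * ((norm (Z 0 - u))^2 - (norm (Z (Suc n) - u))^2)"
  proof
    fix u
    show "(\<Sum>k<Suc n. (real k + 2)^2 * f (Y (Suc k)) - real k * (real k + 2) * f (Y k)) \<le>
      (\<Sum>k<Suc n. 2 * (real k + 2) * (f (X (Suc k)) + g (X (Suc k)) \<bullet> (u - X (Suc k))))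
      + 2 * L * ((norm (Z 0 - u))^2 - (norm (Z (Suc n) - u))^2)"
      using conjunct2[OF Suc.IH, rule_format, of u] st(3)[of u]
      by (simp only: sum.lessThan_Suc right_diff_distrib)
  qed
  have Zb': "Z (Suc n) \<in> cball xs R"
  proof -
    have lo: "(\<Sum>k<Suc n. (real k + 2)^2 * f (Y (Suc k)) - real k * (real k + 2) * f (Y k))
        \<ge> real (Suc n) * (real (Suc n) + 3) * f xs"
    proof -
      have "(\<Sum>k<Suc n. (real k + 2)^2 * f (Y (Suc k)) - real k * (real k + 2) * f (Y k))
          = (\<Sum>j=1..Suc n - 1. f (Y j)) + (real (Suc n) + 1)^2 * f (Y (Suc n))"
        by (rule tele) simp
      moreover have "(\<Sum>j=1..Suc n - 1. f (Y j)) \<ge> (\<Sum>j=1..Suc n - 1. f xs)"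
        by (rule sum_mono) (rule minim)
      moreover have "(real (Suc n) + 1)^2 * f (Y (Suc n)) \<ge> (real (Suc n) + 1)^2 * f xs"
        by (rule mult_left_mono[OF minim]) simp
      moreover have "(\<Sum>j=1..Suc n - 1. f xs) + (real (Suc n) + 1)^2 * f xs = real (Suc n) * (real (Suc n) + 3) * f xs"
        by (simp add: algebra_simps power2_eq_square)
      ultimately show ?thesis by linarith
    qed
    have hi: "(\<Sum>k<Suc n. 2 * (real k + 2) * (f (X (Suc k)) + g (X (Suc k)) \<bullet> (xs - X (Suc k))))
        \<le> real (Suc n) * (real (Suc n) + 3) * f xs"
    proof -
      have "(\<Sum>k<Suc n. 2 * (real k + 2) * (f (X (Suc k)) + g (X (Suc k)) \<bullet> (xs - X (Suc k))))
          \<le> (\<Sum>k<Suc n. 2 * (real k + 2) * f xs)"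
        by (rule sum_mono) (rule mult_left_mono[OF grad_ineq], simp)
      also have "\<dots> = real (Suc n) * (real (Suc n) + 3) * f xs"
        unfolding sum_distrib_right[symmetric] sumc by simp
      finally show ?thesis .
    qed
    have "2 * L * (norm (Z (Suc n) - xs))^2 \<le> 2 * L * (norm (Z 0 - xs))^2"
      using ineq[rule_format, of xs] lo hi by (simp add: algebra_simps)
    then have "(norm (Z (Suc n) - xs))^2 \<le> (norm (x0 - xs))^2"
      using Lpos by (simp add: XYZ0)
    then have "norm (Z (Suc n) - xs) \<le> norm (x0 - xs)"
      using power2_le_imp_le by fastforce
    then show ?thesis by (simp add: dist_norm norm_minus_commute)
  qed
  show ?case
  proof (rule conjI)
    show "\<forall>j\<le>Suc n. X j \<in> cball xs R \<and> Y j \<in> cball xs R \<and> Z j \<in> cball xs R"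
    proof (intro allI impI)
      fix j assume "j \<le> Suc n"
      then consider "j \<le> n" | "j = Suc n" by linarith
      then show "X j \<in> cball xs R \<and> Y j \<in> cball xs R \<and> Z j \<in> cball xs R"
        by cases (use Suc.IH st Zb' in auto)
    qed
  qed (rule ineq)
qed


end

theorem theorem1:
  fixes f :: "'a::euclidean_space \<Rightarrow> real" and g :: "'a \<Rightarrow> 'a"
    and xs x0 :: 'a and L :: real and N :: nat
  assumes conv: "convex_on UNIV f"
    and grad: "\<And>x. (f has_derivative (\<lambda>h. g x \<bullet> h)) (at x)"
    and minim: "\<And>x. f xs \<le> f x"
    and Lpos: "L > 0"
    and lip: "\<And>x y. x \<in> cball xs (norm (x0 - xs)) \<Longrightarrow> y \<in> cball xs (norm (x0 - xs)) \<Longrightarrow>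
               norm (g y - g x) \<le> L * norm (y - x)"
    and N: "N \<ge> 1"
  shows "(\<forall>k\<le>N. max (norm (fgm_x g L x0 k - xs)) (max (norm (fgm_y g L x0 k - xs)) (norm (fgm_z g L x0 k - xs)))
                   \<le> norm (x0 - xs))
    \<and> (let ybar = (1 / (real N * (real N + 3))) *\<^sub>R
                    ((\<Sum>k=1..N-1. fgm_y g L x0 k) + (real N + 1)^2 *\<^sub>R fgm_y g L x0 N)
       in f ybar \<le> 4 * L / (real N * (real N + 3)) *
             (INF x. (\<Sum>k<N. (real k + 2) / (2 * L) *
                        (f (fgm_x g L x0 (Suc k)) + g (fgm_x g L x0 (Suc k)) \<bullet> (x - fgm_x g L x0 (Suc k))))
                     + 1/2 * (norm (fgm_z g L x0 0 - x))^2)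
        \<and> f ybar - f xs \<le> 2 * L * (norm (fgm_z g L x0 0 - xs))^2 / (real N * (real N + 3))
        \<and> 2 * L * (norm (fgm_z g L x0 0 - xs))^2 / (real N * (real N + 3))
            \<le> 2 * L * (norm (x0 - xs))^2 / (real N + 1)^2)"
proof -
  interpret fgmL f g xs x0 L
    by (rule fgmL.intro) (use conv grad minim Lpos lip in auto)
  obtain m where Nm: "N = Suc m" using N by (cases N) auto
  define D where "D = real N * (real N + 3)"
  have Dpos: "D > 0" using N by (simp add: D_def)
  note M = main[of N]
  have part1: "\<forall>k\<le>N. max (norm (X k - xs)) (max (norm (Y k - xs)) (norm (Z k - xs))) \<le> R"
    using conjunct1[OF M] by (auto simp: dist_norm norm_minus_commute)
  define T where "T = (\<Sum>k<N. (real k + 2)^2 * f (Y (Suc k)) - real k * (real k + 2) * f (Y k))"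
  have Teq: "T = (\<Sum>j=1..N-1. f (Y j)) + (real N + 1)^2 * f (Y N)"
    unfolding T_def by (rule tele[OF N])
  define ybar where "ybar = (1 / (real N * (real N + 3))) *\<^sub>R
                    ((\<Sum>k=1..N-1. Y k) + (real N + 1)^2 *\<^sub>R Y N)"
  define w where "w i = (if i = N then (real N + 1)^2 else 1) / D" for i
  have sw: "(\<Sum>i=1..N. w i) = 1"
  proof -
    have "(\<Sum>i=1..N. w i) = (\<Sum>i=1..m. w i) + w N" unfolding Nm by simp
    also have "(\<Sum>i=1..m. w i) = (\<Sum>i=1..m. 1 / D)"
      by (rule sum.cong) (auto simp: w_def Nm)
    moreover have "w N = (real N + 1)^2 / D" by (simp add: w_def)
    moreover have "real m + (real N + 1)^2 = D" unfolding D_def Nm by (simp add: power2_eq_square algebra_simps)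
    ultimately show ?thesis using Dpos by (simp add: add_divide_distrib[symmetric])
  qed
  have sy: "(\<Sum>i=1..N. w i *\<^sub>R Y i) = ybar"
  proof -
    have "(\<Sum>i=1..N. w i *\<^sub>R Y i) = (\<Sum>i=1..m. w i *\<^sub>R Y i) + w N *\<^sub>R Y N" unfolding Nm by simp
    also have "(\<Sum>i=1..m. w i *\<^sub>R Y i) = (\<Sum>i=1..m. (1 / D) *\<^sub>R Y i)"
      by (rule sum.cong) (auto simp: w_def Nm)
    finally show ?thesis unfolding ybar_def w_def Nm
      by (simp add: D_def Nm scaleR_sum_right[symmetric] scaleR_add_right)
  qed
  have sf: "(\<Sum>i=1..N. w i * f (Y i)) = T / D"
  proof -
    have "(\<Sum>i=1..N. w i * f (Y i)) = (\<Sum>i=1..m. w i * f (Y i)) + w N * f (Y N)" unfolding Nm by simp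
    also have "(\<Sum>i=1..m. w i * f (Y i)) = (\<Sum>i=1..m. f (Y i)) / D"
      unfolding sum_divide_distrib by (rule sum.cong) (auto simp: w_def Nm)
    finally show ?thesis unfolding Teq w_def Nm
      by (simp add: add_divide_distrib)
  qed
  have jensen: "f ybar \<le> T / D"
  proof -
    have "f (\<Sum>i\<in>{1..N}. w i *\<^sub>R Y i) \<le> (\<Sum>i\<in>{1..N}. w i * f (Y i))"
      by (rule convex_on_sum[OF _ _ conv sw]) (use N Dpos in \<open>auto simp: w_def\<close>)
    then show ?thesis unfolding sy sf .
  qed
  define \<psi> where "\<psi> = (\<lambda>x. (\<Sum>k<N. (real k + 2) / (2 * L) *
                        (f (X (Suc k)) + g (X (Suc k)) \<bullet> (x - X (Suc k))))
                     + 1/2 * (norm (Z 0 - x))^2)"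
  have Tpsi: "T \<le> 4 * L * \<psi> u" for u
  proof -
    have "T \<le> (\<Sum>k<N. 2 * (real k + 2) * (f (X (Suc k)) + g (X (Suc k)) \<bullet> (u - X (Suc k))))
      + 2 * L * ((norm (Z 0 - u))^2 - (norm (Z N - u))^2)"
      using conjunct2[OF M] unfolding T_def by blast
    also have "\<dots> \<le> (\<Sum>k<N. 2 * (real k + 2) * (f (X (Suc k)) + g (X (Suc k)) \<bullet> (u - X (Suc k))))
      + 2 * L * (norm (Z 0 - u))^2"
      using Lpos by simp
    also have "\<dots> = 4 * L * \<psi> u"
    proof -
      define lin where "lin k = f (X (Suc k)) + g (X (Suc k)) \<bullet> (u - X (Suc k))" for k
      have "(\<Sum>k<N. 2 * (real k + 2) * lin k) = (\<Sum>k<N. 4 * L * ((real k + 2) / (2 * L) * lin k))"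
        by (rule sum.cong) (use Lpos in auto)
      then have "(\<Sum>k<N. 2 * (real k + 2) * lin k) = 4 * L * (\<Sum>k<N. (real k + 2) / (2 * L) * lin k)"
        by (simp add: sum_distrib_left)
      moreover have "2 * L * (norm (Z 0 - u))^2 = 4 * L * (1/2 * (norm (Z 0 - u))^2)" by simp
      ultimately show ?thesis unfolding \<psi>_def lin_def by (simp add: distrib_left)
    qed
    finally show ?thesis .
  qed
  have b2: "f ybar \<le> 4 * L / D * (INF u. \<psi> u)"
  proof -
    have "f ybar * D / (4 * L) \<le> \<psi> u" for u
    proof -
      have "f ybar * D \<le> T" using jensen Dpos by (simp add: pos_le_divide_eq)
      then have "f ybar * D \<le> 4 * L * \<psi> u" using Tpsi[of u] by linarith
      then show ?thesis using Lpos by (simp add: pos_divide_le_eq mult.commute)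
    qed
    then have "f ybar * D / (4 * L) \<le> (INF u. \<psi> u)"
      by (intro cINF_greatest) auto
    then show ?thesis using Lpos Dpos by (simp add: pos_divide_le_eq field_simps)
  qed
  have b3: "f ybar - f xs \<le> 2 * L * (norm (Z 0 - xs))^2 / D"
  proof -
    have "\<psi> xs \<le> (\<Sum>k<N. (real k + 2) / (2 * L) * f xs) + 1/2 * (norm (Z 0 - xs))^2"
      unfolding \<psi>_def using Lpos
      by (intro add_right_mono sum_mono mult_left_mono grad_ineq) auto
    also have "(\<Sum>k<N. (real k + 2) / (2 * L) * f xs) = D / (4 * L) * f xs"
    proof -
      have "(\<Sum>k<N. (real k + 2) / (2 * L) * f xs) = (\<Sum>k<N. 2 * (real k + 2)) * (f xs / (4 * L))"
        unfolding sum_distrib_right by (rule sum.cong) (use Lpos in \<open>auto simp: field_simps\<close>)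
      then show ?thesis unfolding sumc D_def by simp
    qed
    finally have "4 * L * \<psi> xs \<le> D * f xs + 2 * L * (norm (Z 0 - xs))^2"
      using Lpos by (simp add: field_simps)
    then have "T \<le> D * f xs + 2 * L * (norm (Z 0 - xs))^2" using Tpsi[of xs] by linarith
    then have "T / D \<le> f xs + 2 * L * (norm (Z 0 - xs))^2 / D"
      using Dpos by (simp add: divide_simps mult.commute)
    then show ?thesis using jensen by linarith
  qed
  have b4: "2 * L * (norm (Z 0 - xs))^2 / D \<le> 2 * L * (norm (x0 - xs))^2 / (real N + 1)^2"
  proof -
    have "(real N + 1)^2 \<le> D" unfolding D_def using N by (simp add: power2_eq_square algebra_simps)
    moreover have "0 < (real N + 1)^2" by simp
    ultimately have "0 < D * (real N + 1)^2" using Dpos by simp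
    then show ?thesis unfolding XYZ0
      by (rule divide_left_mono[OF \<open>(real N + 1)^2 \<le> D\<close>, rotated]) (use Lpos in simp)
  qed
  show ?thesis unfolding Let_def
  proof (intro conjI)
    show "\<forall>k\<le>N. max (norm (X k - xs)) (max (norm (Y k - xs)) (norm (Z k - xs))) \<le> R"
      by (rule part1)
  qed (insert b2 b3 b4, unfold ybar_def D_def \<psi>_def, assumption+)
qed
end
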